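(* Fix $\rho\in(0,2]$. For any $N\ge1$, $\kappa\ne0$ and $\omega_1,\dots,\omega_N\in\mathbb{R}$ with \[ N\ge\frac2\rho,\qquad\frac{\max_i|\omega_i|}{|\kappa|}<\frac{\rho^{1.5}}{16}, \] there exists an equilibrium $(\theta_i^0)_{i=1}^N$ of the system $\dot\theta_i=\omega_i-\frac{\kappa}{N}\sum_{j=1}^N(1+\cos\theta_j)\sin\theta_i$ whose order parameter $\frac1N\sum_j(1+\cos\theta_j^0)$ lies in $[\frac14\rho,\frac32\rho]$. Moreover, it can be chosen so that there exists $1\le m\le N$ with $\frac\rho4<\frac mN\le\frac\rho2$ and \[ \frac{2|\omega_i|}{3\rho|\kappa|}\le|\theta_i^0|\le\frac{2\pi|\omega_i|}{\rho|\kappa|}\ (i=1,\dots,m),\qquad\frac{2|\omega_i|}{3\rho|\kappa|}\le|\theta_i^0-\pi|\le\frac{2\pi|\omega_i|}{\rho|\kappa|}\ (i=m+1,\dots,N). \]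
   Context: An equilibrium is an initial datum for which the right-hand side vanishes for every $i$ (so the solution is constant). *)

theory Defs
  imports Complex_Main
begin

text \<open>Oscillators are indexed by i = 1..N; phases and frequencies are functions nat => real.\<close>

definition rhs :: "nat \<Rightarrow> real \<Rightarrow> (nat \<Rightarrow> real) \<Rightarrow> (nat \<Rightarrow> real) \<Rightarrow> nat \<Rightarrow> real" where
  "rhs N \<kappa> \<omega> \<theta> i =
     \<omega> i - (\<kappa> / real N) * (\<Sum>j=1..N. (1 + cos (\<theta> j))) * sin (\<theta> i)"

definition is_equilibrium :: "nat \<Rightarrow> real \<Rightarrow> (nat \<Rightarrow> real) \<Rightarrow> (nat \<Rightarrow> real) \<Rightarrow> bool" where
  "is_equilibrium N \<kappa> \<omega> \<theta> \<longleftrightarrow> (\<forall>i\<in>{1..N}. rhs N \<kappa> \<omega> \<theta> i = 0)"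

definition order_param :: "nat \<Rightarrow> (nat \<Rightarrow> real) \<Rightarrow> real" where
  "order_param N \<theta> = (1 / real N) * (\<Sum>j=1..N. (1 + cos (\<theta> j)))"

end

theory Submission
  imports Defs "HOL-Analysis.Complex_Transcendental"
begin

lemma sum_split_at:
  fixes f :: "nat \<Rightarrow> real"
  assumes "m \<le> N"
  shows "sum f {1..N} = sum f {1..m} + sum f {m+1..N}"
proof -
  have "{1..N} = {1..m} \<union> {m+1..N}" using assms by auto
  moreover have "{1..m} \<inter> {m+1..N} = {}" by auto
  ultimately show ?thesis by (simp add: sum.union_disjoint)
qed

lemma arcsin_upper:
  fixes s :: real
  assumes "s\<^sup>2 \<le> 1/8"
  shows "\<bar>arcsin s\<bar> \<le> pi / 2 * \<bar>s\<bar>"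
proof -
  have main: "arcsin t \<le> pi / 2 * t" if t: "0 < t" "t\<^sup>2 \<le> 1/8" for t :: real
  proof -
    have t1: "t < 1" using t abs_square_less_1[of t] by auto
    have "\<And>x. 0 \<le> x \<Longrightarrow> x \<le> t \<Longrightarrow> DERIV arcsin x :> inverse (sqrt (1 - x\<^sup>2))"
      using t t1 by (intro DERIV_arcsin) auto
    from MVT2[OF t(1) this] obtain z where z: "0 < z" "z < t"
      "arcsin t - arcsin 0 = (t - 0) * inverse (sqrt (1 - z\<^sup>2))" by blast
    have "z\<^sup>2 \<le> t\<^sup>2" using z by (intro power_mono) auto
    hence z2: "z\<^sup>2 \<le> 1/8" using t by simp
    have "(2/pi)\<^sup>2 \<le> 1 - z\<^sup>2"
    proof -
      have "pi > 3" by (rule pi_gt3)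
      hence "2/pi < 2/3" by (simp add: field_simps)
      moreover have "2/pi > 0" by simp
      ultimately have "(2/pi)\<^sup>2 \<le> (2/3)\<^sup>2" by (intro power_mono) auto
      thus ?thesis using z2 by (simp add: power2_eq_square)
    qed
    hence "2/pi \<le> sqrt (1 - z\<^sup>2)" by (simp add: real_le_rsqrt)
    hence "inverse (sqrt (1 - z\<^sup>2)) \<le> pi/2"
      by (metis divide_pos_pos inverse_divide le_imp_inverse_le pi_gt_zero zero_less_numeral)
    hence "arcsin t \<le> t * (pi/2)" using z t by (simp add: mult_left_mono)
    thus ?thesis by (simp add: mult.commute)
  qed
  show ?thesis
  proof (cases "s = 0")
    case True then show ?thesis by simp
  next
    case False
    have a: "\<bar>s\<bar>\<^sup>2 \<le> 1/8" using assms by simp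
    have "\<bar>s\<bar> < 1" using assms abs_square_less_1[of s] by auto
    hence "\<bar>arcsin s\<bar> = arcsin \<bar>s\<bar>"
    proof (cases "s \<ge> 0")
      case True
      have "arcsin 0 \<le> arcsin s" using True \<open>\<bar>s\<bar> < 1\<close> by (intro arcsin_le_arcsin) auto
      then show ?thesis using True by simp
    next
      case False
      have "arcsin s \<le> arcsin 0" using False \<open>\<bar>s\<bar> < 1\<close> by (intro arcsin_le_arcsin) auto
      then show ?thesis using False \<open>\<bar>s\<bar> < 1\<close> by (simp add: arcsin_minus)
    qed
    then show ?thesis using main[of "\<bar>s\<bar>"] a False by simp
  qed
qed

lemma arcsin_lower:
  fixes s :: real assumes "\<bar>s\<bar> \<le> 1"
  shows "\<bar>s\<bar> \<le> \<bar>arcsin s\<bar>"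
  using abs_sin_x_le_abs_x[of "arcsin s"] assms by (simp add: sin_arcsin)

theorem theorem2p20:
  fixes \<rho> \<kappa> :: real and N :: nat and \<omega> :: "nat \<Rightarrow> real"
  assumes "0 < \<rho>" and "\<rho> \<le> 2"
    and "N \<ge> 1" and "\<kappa> \<noteq> 0"
    and "real N \<ge> 2 / \<rho>"
    and "Max ((\<lambda>i. \<bar>\<omega> i\<bar>) ` {1..N}) / \<bar>\<kappa>\<bar> < \<rho> powr (3/2) / 16"
  shows "\<exists>\<theta> :: nat \<Rightarrow> real.
           is_equilibrium N \<kappa> \<omega> \<theta>
         \<and> \<rho> / 4 \<le> order_param N \<theta> \<and> order_param N \<theta> \<le> 3 / 2 * \<rho>
         \<and> (\<exists>m::nat. 1 \<le> m \<and> m \<le> N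
              \<and> \<rho> / 4 < real m / real N \<and> real m / real N \<le> \<rho> / 2
              \<and> (\<forall>i\<in>{1..m}.
                   2 * \<bar>\<omega> i\<bar> / (3 * \<rho> * \<bar>\<kappa>\<bar>) \<le> \<bar>\<theta> i\<bar>
                 \<and> \<bar>\<theta> i\<bar> \<le> 2 * pi * \<bar>\<omega> i\<bar> / (\<rho> * \<bar>\<kappa>\<bar>))
              \<and> (\<forall>i\<in>{m+1..N}.
                   2 * \<bar>\<omega> i\<bar> / (3 * \<rho> * \<bar>\<kappa>\<bar>) \<le> \<bar>\<theta> i - pi\<bar>
                 \<and> \<bar>\<theta> i - pi\<bar> \<le> 2 * pi * \<bar>\<omega> i\<bar> / (\<rho> * \<bar>\<kappa>\<bar>)))"
proof -
  note r0 = assms(1) and r2 = assms(2)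
  define w where "w j = \<omega> j / \<kappa>" for j
  define m where "m = nat \<lfloor>\<rho> * real N / 2\<rfloor>"
  have N0: "real N > 0" using assms(3) by simp
  have x1: "\<rho> * real N / 2 \<ge> 1" using assms(1,5) by (simp add: field_simps)
  have mfl: "real m = of_int \<lfloor>\<rho> * real N / 2\<rfloor>" unfolding m_def using x1 by simp
  have mle: "real m \<le> \<rho> * real N / 2" using mfl by linarith
  have fl1: "\<lfloor>\<rho> * real N / 2\<rfloor> \<ge> 1" using x1 by linarith
  have mgt: "real m > \<rho> * real N / 4" using mfl fl1 by linarith
  have m1: "1 \<le> m" using mfl fl1 by linarith
  have "\<rho> * real N \<le> 2 * real N" using r2 N0 by (intro mult_right_mono) auto
  hence mleN: "real m \<le> real N" using mle by linarith
  hence mN: "m \<le> N" by simp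
  have Mfin: "finite ((\<lambda>i. \<bar>\<omega> i\<bar>) ` {1..N})" by simp
  have wb: "\<bar>w j\<bar> < \<rho> powr (3/2) / 16" if j: "j \<in> {1..N}" for j
  proof -
    have "\<bar>\<omega> j\<bar> \<le> Max ((\<lambda>i. \<bar>\<omega> i\<bar>) ` {1..N})" using j Mfin by (intro Max_ge) auto
    hence "\<bar>\<omega> j\<bar> / \<bar>\<kappa>\<bar> \<le> Max ((\<lambda>i. \<bar>\<omega> i\<bar>) ` {1..N}) / \<bar>\<kappa>\<bar>"
      using assms(4) by (simp add: divide_right_mono)
    moreover have "\<bar>w j\<bar> = \<bar>\<omega> j\<bar> / \<bar>\<kappa>\<bar>" unfolding w_def by (simp add: abs_divide)
    ultimately show ?thesis using assms(6) by linarith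
  qed
  have rp: "\<rho> powr (3/2) = \<rho> * sqrt \<rho>"
  proof -
    have "\<rho> powr (3/2) = \<rho> powr (1 + 1/2)" by simp
    also have "\<dots> = \<rho> powr 1 * \<rho> powr (1/2)" by (rule powr_add)
    also have "\<dots> = \<rho> * sqrt \<rho>" using r0 by (simp add: powr_half_sqrt)
    finally show ?thesis .
  qed
  have sq: "(w j / R)\<^sup>2 \<le> \<rho> / 16" if j: "j \<in> {1..N}" and R: "\<rho> / 4 \<le> R" for j R
  proof -
    have "\<bar>w j\<bar>\<^sup>2 \<le> (\<rho> * sqrt \<rho> / 16)\<^sup>2" using wb[OF j] rp by (intro power_mono) auto
    moreover have "(\<rho> * sqrt \<rho> / 16)\<^sup>2 = \<rho>\<^sup>2 * (sqrt \<rho>)\<^sup>2 / 256"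
      by (simp add: power_mult_distrib power_divide)
    moreover have "\<rho>\<^sup>2 * (sqrt \<rho>)\<^sup>2 / 256 = \<rho>^3 / 256" using r0 by (simp add: power2_eq_square power3_eq_cube)
    ultimately have w2: "(w j)\<^sup>2 \<le> \<rho>^3 / 256" by simp
    have R2: "(\<rho>/4)\<^sup>2 \<le> R\<^sup>2" using R r0 by (intro power_mono) auto
    have "(w j / R)\<^sup>2 = (w j)\<^sup>2 / R\<^sup>2" by (simp add: power_divide)
    also have "\<dots> \<le> (\<rho>^3 / 256) / (\<rho>/4)\<^sup>2"
      using w2 R2 r0 by (intro frac_le) auto
    also have "\<dots> = \<rho> / 16" using r0 by (simp add: power2_eq_square power3_eq_cube field_simps)
    finally show ?thesis .
  qed
  define c where "c j R = sqrt (1 - (w j / R)\<^sup>2)" for j R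
  define F where "F R = (1 / real N) * ((\<Sum>j=1..m. 1 + c j R) + (\<Sum>j=m+1..N. 1 - c j R))" for R
  have cb: "1 - \<rho> / 16 \<le> c j R \<and> c j R \<le> 1" if j: "j \<in> {1..N}" and R: "\<rho> / 4 \<le> R" for j R
  proof -
    define y where "y = 1 - (w j / R)\<^sup>2"
    have y0: "0 \<le> y" "y \<le> 1" using sq[OF j R] r2 unfolding y_def by auto
    have "y\<^sup>2 \<le> y" using y0 by (simp add: power2_eq_square mult_left_le_one_le)
    hence "y \<le> sqrt y" by (rule real_le_rsqrt)
    moreover have "sqrt y \<le> 1" using y0 by simp
    moreover have "1 - \<rho>/16 \<le> y" using sq[OF j R] unfolding y_def by simp
    ultimately show ?thesis unfolding c_def y_def[symmetric] by simp
  qed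
  have S1lo: "real m * (1 - \<rho>/16 + 1) \<le> (\<Sum>j=1..m. 1 + c j R)" if R: "\<rho> / 4 \<le> R" for R
  proof -
    have "(\<Sum>j=1..m. 1 - \<rho>/16 + 1) \<le> (\<Sum>j=1..m. 1 + c j R)"
    proof (intro sum_mono)
      fix j assume "j \<in> {1..m}" hence "j \<in> {1..N}" using mN by auto
      from cb[OF this R] show "1 - \<rho>/16 + 1 \<le> 1 + c j R" by linarith
    qed
    thus ?thesis by simp
  qed
  have S1hi: "(\<Sum>j=1..m. 1 + c j R) \<le> real m * 2" if R: "\<rho> / 4 \<le> R" for R
  proof -
    have "(\<Sum>j=1..m. 1 + c j R) \<le> (\<Sum>j=1..m. 2)"
    proof (intro sum_mono)
      fix j assume "j \<in> {1..m}" hence "j \<in> {1..N}" using mN by auto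
      from cb[OF this R] show "1 + c j R \<le> 2" by linarith
    qed
    thus ?thesis by simp
  qed
  have S2lo: "0 \<le> (\<Sum>j=m+1..N. 1 - c j R)" if R: "\<rho> / 4 \<le> R" for R
  proof (intro sum_nonneg)
    fix j assume "j \<in> {m+1..N}" hence "j \<in> {1..N}" by auto
    from cb[OF this R] show "0 \<le> 1 - c j R" by linarith
  qed
  have S2hi: "(\<Sum>j=m+1..N. 1 - c j R) \<le> real (N - m) * (\<rho>/16)" if R: "\<rho> / 4 \<le> R" for R
  proof -
    have "(\<Sum>j=m+1..N. 1 - c j R) \<le> (\<Sum>j=m+1..N. \<rho>/16)"
    proof (intro sum_mono)
      fix j assume "j \<in> {m+1..N}" hence "j \<in> {1..N}" by auto
      from cb[OF this R] show "1 - c j R \<le> \<rho>/16" by linarith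
    qed
    thus ?thesis by simp
  qed
  have Flo: "F (\<rho>/4) \<ge> \<rho>/4"
  proof -
    have "real m * 1 \<le> real m * (1 - \<rho>/16 + 1)" using r2 by (intro mult_left_mono) auto
    hence "real m * (1 - \<rho>/16 + 1) \<ge> real m" by simp
    hence "(\<Sum>j=1..m. 1 + c j (\<rho>/4)) + (\<Sum>j=m+1..N. 1 - c j (\<rho>/4)) \<ge> \<rho> * real N / 4"
      using S1lo[of "\<rho>/4"] S2lo[of "\<rho>/4"] mgt by linarith
    thus ?thesis unfolding F_def using N0 by (simp add: field_simps)
  qed
  have Fhi: "F (3/2*\<rho>) \<le> 3/2*\<rho>"
  proof -
    have hh: "\<rho>/4 \<le> 3/2*\<rho>" using r0 by simp
    have "0 < \<rho> * real N" using r0 N0 by simp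
    hence kk: "real N * (\<rho>/16) \<le> \<rho> * real N / 2" by simp
    have "real (N - m) * (\<rho>/16) \<le> real N * (\<rho>/16)" using r0 by (intro mult_right_mono) auto
    hence "(\<Sum>j=1..m. 1 + c j (3/2*\<rho>)) + (\<Sum>j=m+1..N. 1 - c j (3/2*\<rho>)) \<le> 3/2*\<rho> * real N"
      using S1hi[of "3/2*\<rho>"] S2hi[of "3/2*\<rho>"] mle r0 hh kk by linarith
    thus ?thesis unfolding F_def using N0 by (simp add: field_simps)
  qed
  have cont: "continuous_on {\<rho>/4..3/2*\<rho>} (\<lambda>R. F R - R)"
    unfolding F_def c_def using r0 by (intro continuous_intros) auto
  have "F (3/2*\<rho>) - 3/2*\<rho> \<le> 0" "0 \<le> F (\<rho>/4) - \<rho>/4" "\<rho>/4 \<le> 3/2*\<rho>"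
    using Fhi Flo r0 by auto
  from IVT2'[of "\<lambda>R. F R - R", OF this cont] obtain R where
    R: "\<rho>/4 \<le> R" "R \<le> 3/2*\<rho>" "F R = R" by auto
  have Rpos: "R > 0" using R r0 by linarith
  define \<theta> where "\<theta> j = (if j \<le> m then arcsin (w j / R) else pi - arcsin (w j / R))" for j
  have s1: "\<bar>w j / R\<bar> \<le> 1" "(w j / R)\<^sup>2 \<le> 1/8" if j: "j \<in> {1..N}" for j
  proof -
    show "(w j / R)\<^sup>2 \<le> 1/8" using sq[OF j R(1)] r2 by simp
    thus "\<bar>w j / R\<bar> \<le> 1" using abs_square_le_1 by fastforce
  qed
  have a1: "-1 \<le> w j / R" "w j / R \<le> 1" if j: "j \<in> {1..N}" for j
    using abs_le_iff[of "w j / R" 1] s1(1)[OF j] by auto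
  have costh: "1 + cos (\<theta> j) = (if j \<le> m then 1 + c j R else 1 - c j R)" if j: "j \<in> {1..N}" for j
    using a1[OF j] unfolding \<theta>_def c_def by (simp add: cos_arcsin)
  have sinth: "sin (\<theta> j) = w j / R" if j: "j \<in> {1..N}" for j
    using a1[OF j] unfolding \<theta>_def by (simp add: sin_arcsin)
  have sumeq: "(\<Sum>j=1..N. 1 + cos (\<theta> j)) = real N * R"
  proof -
    have "(\<Sum>j=1..N. 1 + cos (\<theta> j)) = (\<Sum>j=1..m. 1 + cos (\<theta> j)) + (\<Sum>j=m+1..N. 1 + cos (\<theta> j))"
      using mN by (rule sum_split_at)
    also have "\<dots> = (\<Sum>j=1..m. 1 + c j R) + (\<Sum>j=m+1..N. 1 - c j R)"
    proof -
      have e1: "(\<Sum>j=1..m. 1 + cos (\<theta> j)) = (\<Sum>j=1..m. 1 + c j R)"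
      proof (rule sum.cong[OF refl])
        fix j assume j: "j \<in> {1..m}"
        hence "j \<in> {1..N}" "j \<le> m" using mN by auto
        from costh[OF this(1)] this(2) show "1 + cos (\<theta> j) = 1 + c j R" by simp
      qed
      have e2: "(\<Sum>j=m+1..N. 1 + cos (\<theta> j)) = (\<Sum>j=m+1..N. 1 - c j R)"
      proof (rule sum.cong[OF refl])
        fix j assume j: "j \<in> {m+1..N}"
        hence "j \<in> {1..N}" "\<not> j \<le> m" by auto
        from costh[OF this(1)] this(2) show "1 + cos (\<theta> j) = 1 - c j R" by simp
      qed
      show ?thesis using e1 e2 by simp
    qed
    also have "\<dots> = real N * R" using R(3) N0 unfolding F_def by (simp add: field_simps)
    finally show ?thesis .
  qed
  have op: "order_param N \<theta> = R" unfolding order_param_def sumeq using N0 by simp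
  have eq: "is_equilibrium N \<kappa> \<omega> \<theta>"
    unfolding is_equilibrium_def rhs_def sumeq
    using sinth N0 Rpos assms(4) by (simp add: w_def)
  have bnds: "2 * \<bar>\<omega> j\<bar> / (3 * \<rho> * \<bar>\<kappa>\<bar>) \<le> \<bar>arcsin (w j / R)\<bar>
       \<and> \<bar>arcsin (w j / R)\<bar> \<le> 2 * pi * \<bar>\<omega> j\<bar> / (\<rho> * \<bar>\<kappa>\<bar>)" if j: "j \<in> {1..N}" for j
  proof -
    have e: "\<bar>w j / R\<bar> = \<bar>\<omega> j\<bar> / (\<bar>\<kappa>\<bar> * R)" using Rpos by (simp add: w_def abs_divide abs_mult)
    have "2 * \<bar>\<omega> j\<bar> / (3 * \<rho> * \<bar>\<kappa>\<bar>) = \<bar>\<omega> j\<bar> / (\<bar>\<kappa>\<bar> * (3/2*\<rho>))" by (simp add: field_simps)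
    also have "\<dots> \<le> \<bar>\<omega> j\<bar> / (\<bar>\<kappa>\<bar> * R)"
      using R Rpos assms(4) by (intro divide_left_mono mult_left_mono) auto
    also have "\<dots> \<le> \<bar>arcsin (w j / R)\<bar>" using arcsin_lower[OF s1(1)[OF j]] e by simp
    finally have L: "2 * \<bar>\<omega> j\<bar> / (3 * \<rho> * \<bar>\<kappa>\<bar>) \<le> \<bar>arcsin (w j / R)\<bar>" .
    have "\<bar>arcsin (w j / R)\<bar> \<le> pi / 2 * \<bar>w j / R\<bar>" by (rule arcsin_upper[OF s1(2)[OF j]])
    also have "\<dots> = pi / 2 * (\<bar>\<omega> j\<bar> / (\<bar>\<kappa>\<bar> * R))" by (simp only: e)
    also have "\<dots> \<le> pi / 2 * (\<bar>\<omega> j\<bar> / (\<bar>\<kappa>\<bar> * (\<rho>/4)))"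
      using R r0 assms(4) by (intro mult_left_mono divide_left_mono mult_pos_pos) auto
    also have "\<dots> = 2 * pi * \<bar>\<omega> j\<bar> / (\<rho> * \<bar>\<kappa>\<bar>)" by (simp add: field_simps)
    finally show ?thesis using L by simp
  qed
  have part1: "\<forall>i\<in>{1..m}.
                   2 * \<bar>\<omega> i\<bar> / (3 * \<rho> * \<bar>\<kappa>\<bar>) \<le> \<bar>\<theta> i\<bar>
                 \<and> \<bar>\<theta> i\<bar> \<le> 2 * pi * \<bar>\<omega> i\<bar> / (\<rho> * \<bar>\<kappa>\<bar>)"
    using bnds mN unfolding \<theta>_def by auto
  have part2: "\<forall>i\<in>{m+1..N}.
                   2 * \<bar>\<omega> i\<bar> / (3 * \<rho> * \<bar>\<kappa>\<bar>) \<le> \<bar>\<theta> i - pi\<bar>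
                 \<and> \<bar>\<theta> i - pi\<bar> \<le> 2 * pi * \<bar>\<omega> i\<bar> / (\<rho> * \<bar>\<kappa>\<bar>)"
    using bnds m1 unfolding \<theta>_def by auto
  have mr: "\<rho> / 4 < real m / real N" "real m / real N \<le> \<rho> / 2"
    using mgt mle N0 by (simp_all add: field_simps)
  show ?thesis
    using eq op R(1,2) m1 mN mr part1 part2 by blast
qed

end
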